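(* Let $R$ be a ring, $*\in\{l,r,\emptyset\}$, $S\in\mathbb{L}_*(R,\mathfrak{a})$ and $T\in\mathbb{L}_*(R,\mathfrak{b})$ with $S\subseteq T$. Then $\mathfrak{a}\subseteq\mathfrak{b}$, and for $*\in\{l,\emptyset\}$ the map $S^{-1}R\to T^{-1}R$, $s^{-1}r\mapsto s^{-1}r$ (with $s\in S\subseteq T$) is an $R$-homomorphism with kernel $S^{-1}(\mathfrak{b}/\mathfrak{a})=\overline{S}^{-1}(\mathfrak{b}/\mathfrak{a})$, where $\overline{S}=\{s+\mathfrak{a}:s\in S\}$. The analogous statement (with right fractions $rs^{-1}\mapsto rs^{-1}$) holds for $*=r$.
   Context: Rings are associative with $1$. Multiplicative set: $SS\subseteq S$, $1\in S$, $0\notin S$. $R\langle S^{-1}\rangle=R\langle X_S\rangle/I_S$ ($R\langle X_S\rangle$ freely generated by $R$ and noncommuting $x_s$, $I_S$ generated by $sx_s-1,x_ss-1$); $\mathrm{ass}_R(S)=\ker(R\to R\langle S^{-1}\rangle)$. Left localizable: $R\langle S^{-1}\rangle\ne0$ and every element has the form $s^{-1}r:=(x_s+I_S)(r+I_S)$; right localizable: every element has the form $rs^{-1}:=(r+I_S)(x_s+I_S)$ (and ring nonzero); localizable: both. $\mathbb{L}_*(R,\mathfrak{a})$ is the set of $*$-localizable sets ($*=l$ left, $r$ right, $\emptyset$ two-sided) $S$ with $\mathrm{ass}_R(S)=\mathfrak{a}$. For $*\in\{l,\emptyset\}$, $S^{-1}R$ denotes $R\langle S^{-1}\rangle$; it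 is $R$-isomorphic to the Ore localization $\overline{S}^{-1}(R/\mathfrak{a})$, and $\overline{S}^{-1}(\mathfrak{b}/\mathfrak{a})=\{\overline{s}^{-1}(b+\mathfrak{a}): s\in S,b\in\mathfrak{b}\}$. *)

theory Defs
  imports "HOL-Algebra.Algebra"
begin

text \<open>Letters of the alphabet: Inl r stands for the element r of R,
  Inr s stands for the new noncommuting variable x_s.\<close>

type_synonym 'a word = "('a + 'a) list"
type_synonym 'a fr = "'a word \<Rightarrow> int"

definition fr_delta :: "'a word \<Rightarrow> 'a fr" where
  "fr_delta w = (\<lambda>v. if v = w then 1 else 0)"

definition fr_mult :: "'a fr \<Rightarrow> 'a fr \<Rightarrow> 'a fr" where
  "fr_mult f g = (\<lambda>w. \<Sum>i\<le>length w. f (take i w) * g (drop i w))"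

definition free_ring :: "('a, 'm) ring_scheme \<Rightarrow> 'a set \<Rightarrow> 'a fr ring" where
  "free_ring R S =
    \<lparr>carrier = {f. finite {w. f w \<noteq> 0} \<and>
                   (\<forall>w. f w \<noteq> 0 \<longrightarrow> set w \<subseteq> Inl ` carrier R \<union> Inr ` S)},
     monoid.mult = fr_mult, one = fr_delta [], ring.zero = (\<lambda>w. 0), add = (\<lambda>f g w. f w + g w)\<rparr>"

text \<open>Relations: those making r \<mapsto> r a unital ring homomorphism R \<rightarrow> R<X_S>
  (so that the quotient by them is R<X_S>, freely generated by R and the x_s),
  together with the generators s x_s - 1 and x_s s - 1 of I_S.\<close>
definition loc_rels :: "('a, 'm) ring_scheme \<Rightarrow> 'a set \<Rightarrow> 'a fr set" where
  "loc_rels R S =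
     {(\<lambda>v. fr_delta [Inl (r \<oplus>\<^bsub>R\<^esub> r')] v - fr_delta [Inl r] v - fr_delta [Inl r'] v)
        | r r'. r \<in> carrier R \<and> r' \<in> carrier R}
   \<union> {(\<lambda>v. fr_delta [Inl (r \<otimes>\<^bsub>R\<^esub> r')] v - fr_delta [Inl r, Inl r'] v)
        | r r'. r \<in> carrier R \<and> r' \<in> carrier R}
   \<union> {(\<lambda>v. fr_delta [Inl \<one>\<^bsub>R\<^esub>] v - fr_delta [] v)}
   \<union> {(\<lambda>v. fr_delta [Inl s, Inr s] v - fr_delta [] v) | s. s \<in> S}
   \<union> {(\<lambda>v. fr_delta [Inr s, Inl s] v - fr_delta [] v) | s. s \<in> S}"

definition loc_ideal :: "('a, 'm) ring_scheme \<Rightarrow> 'a set \<Rightarrow> 'a fr set" where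
  "loc_ideal R S = genideal (free_ring R S) (loc_rels R S)"

definition loc_ring :: "('a, 'm) ring_scheme \<Rightarrow> 'a set \<Rightarrow> 'a fr set ring" where
  "loc_ring R S = free_ring R S Quot loc_ideal R S"

definition loc_map :: "('a, 'm) ring_scheme \<Rightarrow> 'a set \<Rightarrow> 'a \<Rightarrow> 'a fr set" where
  "loc_map R S r = loc_ideal R S +>\<^bsub>free_ring R S\<^esub> fr_delta [Inl r]"

definition loc_inv :: "('a, 'm) ring_scheme \<Rightarrow> 'a set \<Rightarrow> 'a \<Rightarrow> 'a fr set" where
  "loc_inv R S s = loc_ideal R S +>\<^bsub>free_ring R S\<^esub> fr_delta [Inr s]"

definition ass :: "('a, 'm) ring_scheme \<Rightarrow> 'a set \<Rightarrow> 'a set" where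
  "ass R S = {r \<in> carrier R. loc_map R S r = \<zero>\<^bsub>loc_ring R S\<^esub>}"

definition multiplicative_set :: "('a, 'm) ring_scheme \<Rightarrow> 'a set \<Rightarrow> bool" where
  "multiplicative_set R S \<longleftrightarrow> S \<subseteq> carrier R \<and> \<one>\<^bsub>R\<^esub> \<in> S \<and> \<zero>\<^bsub>R\<^esub> \<notin> S \<and>
     (\<forall>s\<in>S. \<forall>t\<in>S. s \<otimes>\<^bsub>R\<^esub> t \<in> S)"

definition left_localizable :: "('a, 'm) ring_scheme \<Rightarrow> 'a set \<Rightarrow> bool" where
  "left_localizable R S \<longleftrightarrow> multiplicative_set R S \<and>
     \<one>\<^bsub>loc_ring R S\<^esub> \<noteq> \<zero>\<^bsub>loc_ring R S\<^esub> \<and>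
     (\<forall>q \<in> carrier (loc_ring R S). \<exists>s\<in>S. \<exists>r\<in>carrier R.
        q = loc_inv R S s \<otimes>\<^bsub>loc_ring R S\<^esub> loc_map R S r)"

definition right_localizable :: "('a, 'm) ring_scheme \<Rightarrow> 'a set \<Rightarrow> bool" where
  "right_localizable R S \<longleftrightarrow> multiplicative_set R S \<and>
     \<one>\<^bsub>loc_ring R S\<^esub> \<noteq> \<zero>\<^bsub>loc_ring R S\<^esub> \<and>
     (\<forall>q \<in> carrier (loc_ring R S). \<exists>s\<in>S. \<exists>r\<in>carrier R.
        q = loc_map R S r \<otimes>\<^bsub>loc_ring R S\<^esub> loc_inv R S s)"

datatype loc_kind = LeftLoc | RightLoc | TwoSided

definition kind_localizable :: "loc_kind \<Rightarrow> ('a, 'm) ring_scheme \<Rightarrow> 'a set \<Rightarrow> bool" where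
  "kind_localizable k R S = (case k of
      LeftLoc \<Rightarrow> left_localizable R S
    | RightLoc \<Rightarrow> right_localizable R S
    | TwoSided \<Rightarrow> left_localizable R S \<and> right_localizable R S)"

definition Lset :: "loc_kind \<Rightarrow> ('a, 'm) ring_scheme \<Rightarrow> 'a set \<Rightarrow> 'a set set" where
  "Lset k R \<aa> = {S. kind_localizable k R S \<and> ass R S = \<aa>}"

end

theory Submission imports Defs begin

lemma fr_mult_assoc: "fr_mult (fr_mult f g) h = fr_mult f (fr_mult g h)"
proof (rule ext)
  fix w :: "'a word"
  define n where "n = length w"
  have "fr_mult (fr_mult f g) h w =
     (\<Sum>i\<le>n. \<Sum>j\<le>i. f (take j w) * g (drop j (take i w)) * h (drop i w))"
    unfolding fr_mult_def n_def
    by (rule sum.cong) (auto simp: sum_distrib_right min_def intro!: sum.cong)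
  also have "\<dots> = (\<Sum>i\<le>n. \<Sum>j\<in>{j\<in>{..n}. j \<le> i}. f (take j w) * g (drop j (take i w)) * h (drop i w))"
    by (rule sum.cong) (auto intro!: sum.cong)
  also have "\<dots> = (\<Sum>j\<le>n. \<Sum>i\<in>{i\<in>{..n}. j \<le> i}. f (take j w) * g (drop j (take i w)) * h (drop i w))"
    by (rule sum.swap_restrict) auto
  also have "\<dots> = (\<Sum>j\<le>n. \<Sum>k\<le>n-j. f (take j w) * g (drop j (take (j+k) w)) * h (drop (j+k) w))"
  proof (rule sum.cong[OF refl])
    fix j assume j: "j \<in> {..n}"
    have im: "(\<lambda>k. j + k) ` {..n-j} = {i\<in>{..n}. j \<le> i}"
      using j by (auto simp: image_iff) (metis add_diff_inverse_nat atMost_iff diff_le_mono not_less)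
    show "(\<Sum>i\<in>{i\<in>{..n}. j \<le> i}. f (take j w) * g (drop j (take i w)) * h (drop i w)) =
          (\<Sum>k\<le>n-j. f (take j w) * g (drop j (take (j+k) w)) * h (drop (j+k) w))"
      by (subst im[symmetric], subst sum.reindex) (auto simp: inj_on_def)
  qed
  also have "\<dots> = fr_mult f (fr_mult g h) w"
    unfolding fr_mult_def n_def
    by (rule sum.cong) (auto simp: sum_distrib_left take_drop drop_drop add.commute mult.assoc intro!: sum.cong)
  finally show "fr_mult (fr_mult f g) h w = fr_mult f (fr_mult g h) w" .
qed

lemma fr_mult_one_left: "fr_mult (fr_delta []) f = f"
proof (rule ext)
  fix w :: "'a word"
  have "fr_mult (fr_delta []) f w = (\<Sum>i\<le>length w. if i = 0 then f w else 0)"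
    unfolding fr_mult_def fr_delta_def by (rule sum.cong) auto
  then show "fr_mult (fr_delta []) f w = f w" by simp
qed

lemma fr_mult_one_right: "fr_mult f (fr_delta []) = f"
proof (rule ext)
  fix w :: "'a word"
  have "fr_mult f (fr_delta []) w = (\<Sum>i\<le>length w. if i = length w then f w else 0)"
    unfolding fr_mult_def fr_delta_def by (rule sum.cong) auto
  then show "fr_mult f (fr_delta []) w = f w" by simp
qed

lemma fr_mult_delta: "fr_mult (fr_delta u) (fr_delta v) = fr_delta (u @ v)"
proof (rule ext)
  fix w :: "'a word"
  have "fr_mult (fr_delta u) (fr_delta v) w = (\<Sum>i\<le>length w. if i = length u \<and> w = u @ v then 1 else 0)"
    unfolding fr_mult_def fr_delta_def
  proof (rule sum.cong[OF refl])
    fix i assume "i \<in> {..length w}"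
    then show "(if take i w = u then 1 else 0) * (if drop i w = v then 1 else 0) =
         (if i = length u \<and> w = u @ v then 1 else (0::int))"
      by (auto simp: min_def)
  qed
  also have "\<dots> = fr_delta (u @ v) w"
    by (auto simp: fr_delta_def)
  finally show "fr_mult (fr_delta u) (fr_delta v) w = fr_delta (u @ v) w" .
qed

lemma fr_mult_distl: "fr_mult f (\<lambda>w. g w + h w) = (\<lambda>w. fr_mult f g w + fr_mult f h w)"
  unfolding fr_mult_def by (auto simp: distrib_left sum.distrib)

lemma fr_mult_distr: "fr_mult (\<lambda>w. g w + h w) f = (\<lambda>w. fr_mult g f w + fr_mult h f w)"
  unfolding fr_mult_def by (auto simp: distrib_right sum.distrib)

lemma fr_mult_nz: "fr_mult f g w \<noteq> 0 \<Longrightarrow> \<exists>i. f (take i w) \<noteq> 0 \<and> g (drop i w) \<noteq> 0"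
  unfolding fr_mult_def by (metis (no_types, lifting) mult_eq_0_iff sum.neutral)

lemma free_ring_simps:
  "carrier (free_ring R S) = {f. finite {w. f w \<noteq> 0} \<and>
                   (\<forall>w. f w \<noteq> 0 \<longrightarrow> set w \<subseteq> Inl ` carrier R \<union> Inr ` S)}"
  "monoid.mult (free_ring R S) = fr_mult" "one (free_ring R S) = fr_delta []"
  "ring.zero (free_ring R S) = (\<lambda>w. 0)" "add (free_ring R S) = (\<lambda>f g w. f w + g w)"
  by (simp_all add: free_ring_def)

lemma fr_mult_closed:
  assumes "f \<in> carrier (free_ring R S)" "g \<in> carrier (free_ring R S)"
  shows "fr_mult f g \<in> carrier (free_ring R S)"
proof -
  have "{w. fr_mult f g w \<noteq> 0} \<subseteq> (\<lambda>(u,v). u @ v) ` ({u. f u \<noteq> 0} \<times> {v. g v \<noteq> 0})"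
  proof
    fix w assume "w \<in> {w. fr_mult f g w \<noteq> 0}"
    then obtain i where "f (take i w) \<noteq> 0" "g (drop i w) \<noteq> 0" using fr_mult_nz by blast
    then show "w \<in> (\<lambda>(u,v). u @ v) ` ({u. f u \<noteq> 0} \<times> {v. g v \<noteq> 0})"
      by (simp add: image_iff) (metis append_take_drop_id)
  qed
  moreover have "finite ((\<lambda>(u,v). u @ v) ` ({u. f u \<noteq> 0} \<times> {v. g v \<noteq> 0}))"
    using assms by (auto simp: free_ring_simps)
  ultimately have "finite {w. fr_mult f g w \<noteq> 0}" by (rule finite_subset)
  moreover have "set w \<subseteq> Inl ` carrier R \<union> Inr ` S" if nz: "fr_mult f g w \<noteq> 0" for w
  proof -
    obtain i where "f (take i w) \<noteq> 0" "g (drop i w) \<noteq> 0" using fr_mult_nz[OF nz] by blast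
    then have "set (take i w) \<subseteq> Inl ` carrier R \<union> Inr ` S" "set (drop i w) \<subseteq> Inl ` carrier R \<union> Inr ` S"
      using assms by (auto simp: free_ring_simps)
    then show ?thesis by (metis append_take_drop_id set_append Un_subset_iff)
  qed
  ultimately show ?thesis by (simp add: free_ring_simps)
qed

lemma free_ring_is_ring: "ring (free_ring R S)"
proof (rule ringI)
  show "abelian_group (free_ring R S)"
  proof (rule abelian_groupI)
    fix x y assume "x \<in> carrier (free_ring R S)" "y \<in> carrier (free_ring R S)"
    then show "x \<oplus>\<^bsub>free_ring R S\<^esub> y \<in> carrier (free_ring R S)"
      apply (simp add: free_ring_simps)
      apply (intro conjI)
       apply (rule finite_subset[of _ "{w. x w \<noteq> 0} \<union> {w. y w \<noteq> 0}"]) apply auto[2]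
      by (metis add.right_neutral)
  next
    fix x assume x: "x \<in> carrier (free_ring R S)"
    show "\<exists>y\<in>carrier (free_ring R S). y \<oplus>\<^bsub>free_ring R S\<^esub> x = \<zero>\<^bsub>free_ring R S\<^esub>"
      using x by (intro bexI[of _ "\<lambda>w. - x w"]) (auto simp: free_ring_simps)
  qed (auto simp: free_ring_simps)
  show "monoid (free_ring R S)"
  proof (rule monoidI)
    show "\<one>\<^bsub>free_ring R S\<^esub> \<in> carrier (free_ring R S)" unfolding free_ring_simps fr_delta_def by auto
  qed (auto simp: free_ring_simps(2,3) fr_mult_closed
        fr_mult_assoc fr_mult_one_left fr_mult_one_right)
qed (auto simp: free_ring_simps fr_mult_distl fr_mult_distr)

lemma free_ring_neg:
  assumes "f \<in> carrier (free_ring R S)"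
  shows "\<ominus>\<^bsub>free_ring R S\<^esub> f = (\<lambda>w. - f w)"
proof -
  interpret ring "free_ring R S" by (rule free_ring_is_ring)
  have "(\<lambda>w. - f w) \<in> carrier (free_ring R S)" using assms by (auto simp: free_ring_simps)
  then show ?thesis
    by (intro minus_equality assms) (auto simp: free_ring_simps)
qed

lemma free_carrierI:
  assumes "\<And>v. f v \<noteq> 0 \<Longrightarrow> v \<in> W" "finite W" "\<And>v. v \<in> W \<Longrightarrow> set v \<subseteq> Inl ` carrier R \<union> Inr ` S"
  shows "f \<in> carrier (free_ring R S)"
  unfolding free_ring_simps using assms finite_subset[of "{w. f w \<noteq> 0}" W] by auto

lemma delta_carrier:
  assumes "set v \<subseteq> Inl ` carrier R \<union> Inr ` S"
  shows "fr_delta v \<in> carrier (free_ring R S)"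
  by (rule free_carrierI[where W="{v}"]) (use assms in \<open>auto simp: fr_delta_def split: if_splits\<close>)

lemma loc_rels_carrier:
  assumes "ring R" "S \<subseteq> carrier R"
  shows "loc_rels R S \<subseteq> carrier (free_ring R S)"
proof -
  interpret R: ring R by fact
  have 1: "(\<lambda>v. fr_delta [Inl (r \<oplus>\<^bsub>R\<^esub> r')] v - fr_delta [Inl r] v - fr_delta [Inl r'] v) \<in> carrier (free_ring R S)"
    if "r \<in> carrier R" "r' \<in> carrier R" for r r'
    by (rule free_carrierI[where W="{[Inl (r \<oplus>\<^bsub>R\<^esub> r')], [Inl r], [Inl r']}"]) (use that in \<open>auto simp: fr_delta_def split: if_splits\<close>)
  have 2: "(\<lambda>v. fr_delta [Inl (r \<otimes>\<^bsub>R\<^esub> r')] v - fr_delta [Inl r, Inl r'] v) \<in> carrier (free_ring R S)"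
    if "r \<in> carrier R" "r' \<in> carrier R" for r r'
    by (rule free_carrierI[where W="{[Inl (r \<otimes>\<^bsub>R\<^esub> r')], [Inl r, Inl r']}"]) (use that in \<open>auto simp: fr_delta_def split: if_splits\<close>)
  have 3: "(\<lambda>v. fr_delta [Inl \<one>\<^bsub>R\<^esub>] v - fr_delta [] v) \<in> carrier (free_ring R S)"
    by (rule free_carrierI[where W="{[Inl \<one>\<^bsub>R\<^esub>], []}"]) (auto simp: fr_delta_def split: if_splits)
  have 4: "(\<lambda>v. fr_delta [Inl s, Inr s] v - fr_delta [] v) \<in> carrier (free_ring R S)" if "s \<in> S" for s
  proof -
    have sc: "s \<in> carrier R" using assms(2) that by blast
    show ?thesis by (rule free_carrierI[where W="{[Inl s, Inr s], []}"]) (use sc that in \<open>auto simp: fr_delta_def split: if_splits\<close>)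
  qed
  have 5: "(\<lambda>v. fr_delta [Inr s, Inl s] v - fr_delta [] v) \<in> carrier (free_ring R S)" if "s \<in> S" for s
  proof -
    have sc: "s \<in> carrier R" using assms(2) that by blast
    show ?thesis by (rule free_carrierI[where W="{[Inr s, Inl s], []}"]) (use sc that in \<open>auto simp: fr_delta_def split: if_splits\<close>)
  qed
  show ?thesis
    unfolding loc_rels_def using 1 2 3 4 5 by blast
qed

lemma loc_ideal_ideal:
  assumes "ring R" "S \<subseteq> carrier R"
  shows "ideal (loc_ideal R S) (free_ring R S)"
  unfolding loc_ideal_def
  by (rule ring.genideal_ideal[OF free_ring_is_ring loc_rels_carrier[OF assms]])

lemma loc_rels_sub: "loc_rels R S \<subseteq> loc_ideal R S" if "ring R" "S \<subseteq> carrier R"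
  unfolding loc_ideal_def
  by (rule ring.genideal_self[OF free_ring_is_ring loc_rels_carrier[OF that]])

lemma free_carrier_mono: "S \<subseteq> T \<Longrightarrow> carrier (free_ring R S) \<subseteq> carrier (free_ring R T)"
  unfolding free_ring_simps by blast

lemma loc_ideal_mono:
  assumes "ring R" "T \<subseteq> carrier R" "S \<subseteq> T"
  shows "loc_ideal R S \<subseteq> loc_ideal R T"
proof -
  have SR: "S \<subseteq> carrier R" using assms by blast
  interpret FS: ring "free_ring R S" by (rule free_ring_is_ring)
  interpret FT: ring "free_ring R T" by (rule free_ring_is_ring)
  interpret IT: ideal "loc_ideal R T" "free_ring R T" by (rule loc_ideal_ideal[OF assms(1,2)])
  define J where "J = loc_ideal R T \<inter> carrier (free_ring R S)"
  have sub: "carrier (free_ring R S) \<subseteq> carrier (free_ring R T)" by (rule free_carrier_mono[OF assms(3)])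
  have "ideal J (free_ring R S)"
  proof (rule idealI)
    show "ring (free_ring R S)" by (rule free_ring_is_ring)
    show "subgroup J (add_monoid (free_ring R S))"
    proof (rule subgroup.intro)
      show "J \<subseteq> carrier (add_monoid (free_ring R S))" unfolding J_def by simp
    next
      fix x y assume xy: "x \<in> J" "y \<in> J"
      have "x \<oplus>\<^bsub>free_ring R S\<^esub> y = x \<oplus>\<^bsub>free_ring R T\<^esub> y" by (simp add: free_ring_simps)
      then show "x \<otimes>\<^bsub>add_monoid (free_ring R S)\<^esub> y \<in> J"
        using xy IT.a_closed[of x y] FS.a_closed[of x y] unfolding J_def by simp
    next
      have "\<zero>\<^bsub>free_ring R S\<^esub> = \<zero>\<^bsub>free_ring R T\<^esub>" by (simp add: free_ring_simps)
      then show "\<one>\<^bsub>add_monoid (free_ring R S)\<^esub> \<in> J"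
        unfolding J_def using IT.zero_closed FS.zero_closed by simp
    next
      fix x assume x: "x \<in> J"
      have xI: "x \<in> loc_ideal R T" and xC: "x \<in> carrier (free_ring R S)" using x unfolding J_def by auto
      have xCT: "x \<in> carrier (free_ring R T)" using xC sub by blast
      have e1: "inv\<^bsub>add_monoid (free_ring R S)\<^esub> x = \<ominus>\<^bsub>free_ring R S\<^esub> x" by (simp add: a_inv_def)
      have e2: "\<ominus>\<^bsub>free_ring R S\<^esub> x = \<ominus>\<^bsub>free_ring R T\<^esub> x"
        unfolding free_ring_neg[OF xC] free_ring_neg[OF xCT] ..
      have a: "\<ominus>\<^bsub>free_ring R T\<^esub> x \<in> loc_ideal R T" by (rule IT.a_inv_closed[OF xI])
      have b: "\<ominus>\<^bsub>free_ring R S\<^esub> x \<in> carrier (free_ring R S)" by (rule FS.a_inv_closed[OF xC])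
      show "inv\<^bsub>add_monoid (free_ring R S)\<^esub> x \<in> J" unfolding J_def e1 using a b e2 by simp
    qed
  next
    fix a x assume ax: "a \<in> J" "x \<in> carrier (free_ring R S)"
    have "x \<otimes>\<^bsub>free_ring R S\<^esub> a = x \<otimes>\<^bsub>free_ring R T\<^esub> a"
      "a \<otimes>\<^bsub>free_ring R S\<^esub> x = a \<otimes>\<^bsub>free_ring R T\<^esub> x" by (simp_all add: free_ring_simps)
    then show "x \<otimes>\<^bsub>free_ring R S\<^esub> a \<in> J" "a \<otimes>\<^bsub>free_ring R S\<^esub> x \<in> J"
      using ax IT.I_l_closed[of a x] IT.I_r_closed[of a x] sub FS.m_closed[of a x] FS.m_closed[of x a]
      unfolding J_def by auto
  qed
  moreover have "loc_rels R S \<subseteq> J"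
  proof -
    have "loc_rels R S \<subseteq> loc_rels R T"
      using assms(3) unfolding loc_rels_def by (intro Un_mono subset_refl) auto
    then show ?thesis
      unfolding J_def using loc_rels_carrier[OF assms(1) SR] loc_rels_sub[OF assms(1,2)] by blast
  qed
  ultimately have "loc_ideal R S \<subseteq> J"
    unfolding loc_ideal_def by (rule FS.genideal_minimal)
  then show ?thesis unfolding J_def by blast
qed

lemma coset_free_eq: "a_r_coset (free_ring R S) I f = a_r_coset (free_ring R T) I f"
  by (simp add: a_r_coset_def r_coset_def free_ring_simps)

lemma loc_ring_is_ring: "ring R \<Longrightarrow> S \<subseteq> carrier R \<Longrightarrow> ring (loc_ring R S)"
  unfolding loc_ring_def by (rule ideal.quotient_is_ring[OF loc_ideal_ideal])

lemma loc_pi_hom: "ring R \<Longrightarrow> S \<subseteq> carrier R \<Longrightarrow>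
   (\<lambda>f. loc_ideal R S +>\<^bsub>free_ring R S\<^esub> f) \<in> ring_hom (free_ring R S) (loc_ring R S)"
  unfolding loc_ring_def using ideal.rcos_ring_hom[OF loc_ideal_ideal] by blast

lemma loc_carrier: "carrier (loc_ring R S) = (\<lambda>f. loc_ideal R S +>\<^bsub>free_ring R S\<^esub> f) ` carrier (free_ring R S)"
  unfolding loc_ring_def FactRing_def A_RCOSETS_def' by (simp add: image_def) blast

lemma letter_delta_carrier:
  "r \<in> carrier R \<Longrightarrow> fr_delta [Inl r] \<in> carrier (free_ring R S)"
  "s \<in> S \<Longrightarrow> fr_delta [Inr s] \<in> carrier (free_ring R S)"
  by (rule delta_carrier; simp)+

lemma loc_map_carrier: "ring R \<Longrightarrow> S \<subseteq> carrier R \<Longrightarrow> r \<in> carrier R \<Longrightarrow> loc_map R S r \<in> carrier (loc_ring R S)"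
proof -
  assume a: "ring R" "S \<subseteq> carrier R" "r \<in> carrier R"
  show ?thesis using ring_hom_closed[OF loc_pi_hom[OF a(1,2)] letter_delta_carrier(1)[OF a(3)]]
    unfolding loc_map_def by simp
qed

lemma loc_inv_carrier: "ring R \<Longrightarrow> S \<subseteq> carrier R \<Longrightarrow> s \<in> S \<Longrightarrow> loc_inv R S s \<in> carrier (loc_ring R S)"
proof -
  assume a: "ring R" "S \<subseteq> carrier R" "s \<in> S"
  show ?thesis using ring_hom_closed[OF loc_pi_hom[OF a(1,2)] letter_delta_carrier(2)[OF a(3)]]
    unfolding loc_inv_def by simp
qed

lemma loc_pi_eq:
  assumes "ring R" "S \<subseteq> carrier R" "(\<lambda>v. fr_delta u v - fr_delta [] v) \<in> loc_rels R S"
    and "fr_delta u \<in> carrier (free_ring R S)"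
  shows "loc_ideal R S +>\<^bsub>free_ring R S\<^esub> fr_delta u = loc_ideal R S +>\<^bsub>free_ring R S\<^esub> fr_delta []"
proof -
  interpret F: ring "free_ring R S" by (rule free_ring_is_ring)
  have one: "fr_delta [] \<in> carrier (free_ring R S)" by (rule delta_carrier) simp
  have "fr_delta u \<ominus>\<^bsub>free_ring R S\<^esub> fr_delta [] = (\<lambda>v. fr_delta u v - fr_delta [] v)"
    unfolding a_minus_def free_ring_neg[OF one] by (simp add: free_ring_simps)
  then have "fr_delta u \<ominus>\<^bsub>free_ring R S\<^esub> fr_delta [] \<in> loc_ideal R S"
    using assms(3) loc_rels_sub[OF assms(1,2)] by auto
  then show ?thesis
    using F.quotient_eq_iff_same_a_r_cos[OF loc_ideal_ideal[OF assms(1,2)] assms(4) one] by simp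
qed

lemma rel_s1: "s \<in> S \<Longrightarrow> (\<lambda>v. fr_delta [Inl s, Inr s] v - fr_delta [] v) \<in> loc_rels R S"
  unfolding loc_rels_def apply (rule UnI1) apply (rule UnI2) by blast

lemma rel_s2: "s \<in> S \<Longrightarrow> (\<lambda>v. fr_delta [Inr s, Inl s] v - fr_delta [] v) \<in> loc_rels R S"
  unfolding loc_rels_def apply (rule UnI2) by blast

lemma loc_map_inv:
  assumes "ring R" "S \<subseteq> carrier R" "s \<in> S"
  shows "loc_map R S s \<otimes>\<^bsub>loc_ring R S\<^esub> loc_inv R S s = \<one>\<^bsub>loc_ring R S\<^esub>"
    and "loc_inv R S s \<otimes>\<^bsub>loc_ring R S\<^esub> loc_map R S s = \<one>\<^bsub>loc_ring R S\<^esub>"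
proof -
  note h = loc_pi_hom[OF assms(1,2)]
  have sc: "s \<in> carrier R" using assms by blast
  have c1: "fr_delta [Inl s] \<in> carrier (free_ring R S)" "fr_delta [Inr s] \<in> carrier (free_ring R S)"
    by (rule letter_delta_carrier(1)[OF sc], rule letter_delta_carrier(2)[OF assms(3)])
  have o: "\<one>\<^bsub>loc_ring R S\<^esub> = loc_ideal R S +>\<^bsub>free_ring R S\<^esub> fr_delta []"
    using ring_hom_one[OF h] by (simp add: free_ring_simps)
  have "loc_map R S s \<otimes>\<^bsub>loc_ring R S\<^esub> loc_inv R S s = loc_ideal R S +>\<^bsub>free_ring R S\<^esub> fr_delta [Inl s, Inr s]"
    unfolding loc_map_def loc_inv_def using ring_hom_mult[OF h c1] by (simp add: free_ring_simps fr_mult_delta)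
  also have "\<dots> = \<one>\<^bsub>loc_ring R S\<^esub>" unfolding o
    by (rule loc_pi_eq[OF assms(1,2) rel_s1[OF assms(3)] delta_carrier]) (use assms(3) sc in auto)
  finally show "loc_map R S s \<otimes>\<^bsub>loc_ring R S\<^esub> loc_inv R S s = \<one>\<^bsub>loc_ring R S\<^esub>" .
  have "loc_inv R S s \<otimes>\<^bsub>loc_ring R S\<^esub> loc_map R S s = loc_ideal R S +>\<^bsub>free_ring R S\<^esub> fr_delta [Inr s, Inl s]"
    unfolding loc_map_def loc_inv_def using ring_hom_mult[OF h c1(2,1)] by (simp add: free_ring_simps fr_mult_delta)
  also have "\<dots> = \<one>\<^bsub>loc_ring R S\<^esub>" unfolding o
    by (rule loc_pi_eq[OF assms(1,2) rel_s2[OF assms(3)] delta_carrier]) (use assms(3) sc in auto)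
  finally show "loc_inv R S s \<otimes>\<^bsub>loc_ring R S\<^esub> loc_map R S s = \<one>\<^bsub>loc_ring R S\<^esub>" .
qed

definition loc_phi :: "('a, 'm) ring_scheme \<Rightarrow> 'a set \<Rightarrow> 'a fr set \<Rightarrow> 'a fr set" where
  "loc_phi R T Y = \<Union>(a_r_coset (free_ring R T) (loc_ideal R T) ` Y)"

lemma phi_coset:
  assumes "ring R" "T \<subseteq> carrier R" "S \<subseteq> T" "f \<in> carrier (free_ring R S)"
  shows "loc_phi R T (loc_ideal R S +>\<^bsub>free_ring R S\<^esub> f) = loc_ideal R T +>\<^bsub>free_ring R T\<^esub> f"
proof -
  have SR: "S \<subseteq> carrier R" using assms by blast
  interpret IT: ideal "loc_ideal R T" "free_ring R T" by (rule loc_ideal_ideal[OF assms(1,2)])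
  interpret IS: ideal "loc_ideal R S" "free_ring R S" by (rule loc_ideal_ideal[OF assms(1) SR])
  have sub: "loc_ideal R S \<subseteq> loc_ideal R T" by (rule loc_ideal_mono[OF assms(1-3)])
  have fT: "f \<in> carrier (free_ring R T)" using free_carrier_mono[OF assms(3)] assms(4) by blast
  have each: "loc_ideal R T +>\<^bsub>free_ring R T\<^esub> y = loc_ideal R T +>\<^bsub>free_ring R T\<^esub> f"
    if y: "y \<in> loc_ideal R S +>\<^bsub>free_ring R S\<^esub> f" for y
  proof -
    have "y \<in> loc_ideal R T +>\<^bsub>free_ring R T\<^esub> f"
      using y sub unfolding a_r_coset_def' free_ring_simps by blast
    then show ?thesis using IT.a_repr_independence'[OF _ fT] by simp
  qed
  have "f \<in> loc_ideal R S +>\<^bsub>free_ring R S\<^esub> f" by (rule IS.a_rcos_self[OF assms(4)])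
  then show ?thesis unfolding loc_phi_def using each by blast
qed

lemma loc_phi_props:
  assumes "ring R" "T \<subseteq> carrier R" "S \<subseteq> T"
  shows "loc_phi R T \<in> ring_hom (loc_ring R S) (loc_ring R T)"
    and "\<And>r. r \<in> carrier R \<Longrightarrow> loc_phi R T (loc_map R S r) = loc_map R T r"
    and "\<And>s. s \<in> S \<Longrightarrow> loc_phi R T (loc_inv R S s) = loc_inv R T s"
proof -
  have SR: "S \<subseteq> carrier R" using assms by blast
  note hS = loc_pi_hom[OF assms(1) SR]
  note hT = loc_pi_hom[OF assms(1,2)]
  note sub = free_carrier_mono[OF assms(3)]
  note pc = phi_coset[OF assms]
  show "loc_phi R T \<in> ring_hom (loc_ring R S) (loc_ring R T)"
  proof (rule ring_hom_memI)
    fix x assume "x \<in> carrier (loc_ring R S)"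
    then obtain f where f: "f \<in> carrier (free_ring R S)" "x = loc_ideal R S +>\<^bsub>free_ring R S\<^esub> f"
      unfolding loc_carrier by blast
    have "f \<in> carrier (free_ring R T)" using f sub by blast
    then show "loc_phi R T x \<in> carrier (loc_ring R T)"
      unfolding f(2) pc[OF f(1)] loc_carrier by blast
  next
    fix x y assume "x \<in> carrier (loc_ring R S)" "y \<in> carrier (loc_ring R S)"
    then obtain f g where f: "f \<in> carrier (free_ring R S)" "x = loc_ideal R S +>\<^bsub>free_ring R S\<^esub> f"
      and g: "g \<in> carrier (free_ring R S)" "y = loc_ideal R S +>\<^bsub>free_ring R S\<^esub> g"
      unfolding loc_carrier by blast
    have fT: "f \<in> carrier (free_ring R T)" and gT: "g \<in> carrier (free_ring R T)" using f g sub by blast+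
    have m: "f \<otimes>\<^bsub>free_ring R S\<^esub> g \<in> carrier (free_ring R S)" by (rule ring.ring_simprules(5)[OF free_ring_is_ring f(1) g(1)])
    have a: "f \<oplus>\<^bsub>free_ring R S\<^esub> g \<in> carrier (free_ring R S)" by (rule ring.ring_simprules(1)[OF free_ring_is_ring f(1) g(1)])
    show "loc_phi R T (x \<otimes>\<^bsub>loc_ring R S\<^esub> y) = loc_phi R T x \<otimes>\<^bsub>loc_ring R T\<^esub> loc_phi R T y"
      unfolding f(2) g(2) ring_hom_mult[OF hS f(1) g(1), symmetric] pc[OF m] pc[OF f(1)] pc[OF g(1)]
        ring_hom_mult[OF hT fT gT, symmetric] by (simp add: free_ring_simps)
    show "loc_phi R T (x \<oplus>\<^bsub>loc_ring R S\<^esub> y) = loc_phi R T x \<oplus>\<^bsub>loc_ring R T\<^esub> loc_phi R T y"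
      unfolding f(2) g(2) ring_hom_add[OF hS f(1) g(1), symmetric] pc[OF a] pc[OF f(1)] pc[OF g(1)]
        ring_hom_add[OF hT fT gT, symmetric] by (simp add: free_ring_simps)
  next
    have o: "\<one>\<^bsub>free_ring R S\<^esub> \<in> carrier (free_ring R S)" by (rule ring.ring_simprules(6)[OF free_ring_is_ring])
    show "loc_phi R T \<one>\<^bsub>loc_ring R S\<^esub> = \<one>\<^bsub>loc_ring R T\<^esub>"
      unfolding ring_hom_one[OF hS, symmetric] ring_hom_one[OF hT, symmetric] pc[OF o]
      by (simp add: free_ring_simps)
  qed
  show "loc_phi R T (loc_map R S r) = loc_map R T r" if "r \<in> carrier R" for r
    unfolding loc_map_def by (rule pc[OF letter_delta_carrier(1)[OF that]])
  show "loc_phi R T (loc_inv R S s) = loc_inv R T s" if "s \<in> S" for s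
    unfolding loc_inv_def by (rule pc[OF letter_delta_carrier(2)[OF that]])
qed

theorem lemma1p10:
  fixes R :: "('a, 'm) ring_scheme" and k :: loc_kind
    and S T \<aa> \<bb> :: "'a set"
  assumes "ring R"
    and "S \<in> Lset k R \<aa>" and "T \<in> Lset k R \<bb>" and "S \<subseteq> T"
  shows "\<aa> \<subseteq> \<bb>
    \<and> ((k = LeftLoc \<or> k = TwoSided) \<longrightarrow>
        (\<exists>\<phi>. \<phi> \<in> ring_hom (loc_ring R S) (loc_ring R T)
           \<and> (\<forall>r\<in>carrier R. \<phi> (loc_map R S r) = loc_map R T r)
           \<and> (\<forall>s\<in>S. \<forall>r\<in>carrier R.
                \<phi> (loc_inv R S s \<otimes>\<^bsub>loc_ring R S\<^esub> loc_map R S r)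
                  = loc_inv R T s \<otimes>\<^bsub>loc_ring R T\<^esub> loc_map R T r)
           \<and> a_kernel (loc_ring R S) (loc_ring R T) \<phi>
                = {loc_inv R S s \<otimes>\<^bsub>loc_ring R S\<^esub> loc_map R S b | s b. s \<in> S \<and> b \<in> \<bb>}))
    \<and> (k = RightLoc \<longrightarrow>
        (\<exists>\<phi>. \<phi> \<in> ring_hom (loc_ring R S) (loc_ring R T)
           \<and> (\<forall>r\<in>carrier R. \<phi> (loc_map R S r) = loc_map R T r)
           \<and> (\<forall>s\<in>S. \<forall>r\<in>carrier R.
                \<phi> (loc_map R S r \<otimes>\<^bsub>loc_ring R S\<^esub> loc_inv R S s)
                  = loc_map R T r \<otimes>\<^bsub>loc_ring R T\<^esub> loc_inv R T s)
           \<and> a_kernel (loc_ring R S) (loc_ring R T) \<phi>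
                = {loc_map R S b \<otimes>\<^bsub>loc_ring R S\<^esub> loc_inv R S s | s b. s \<in> S \<and> b \<in> \<bb>}))"
proof -
  interpret R: ring R by fact
  from assms(2) have kS: "kind_localizable k R S" and aS: "ass R S = \<aa>" by (auto simp: Lset_def)
  from assms(3) have kT: "kind_localizable k R T" and aT: "ass R T = \<bb>" by (auto simp: Lset_def)
  have mT: "multiplicative_set R T" using kT
    by (cases k) (auto simp: kind_localizable_def left_localizable_def right_localizable_def)
  have TR: "T \<subseteq> carrier R" using mT by (simp add: multiplicative_set_def)
  have SR: "S \<subseteq> carrier R" using TR assms(4) by blast
  note P = loc_phi_props[OF assms(1) TR assms(4)]
  interpret LS: ring "loc_ring R S" by (rule loc_ring_is_ring[OF assms(1) SR])
  interpret LT: ring "loc_ring R T" by (rule loc_ring_is_ring[OF assms(1) TR])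
  interpret H: ring_hom_ring "loc_ring R S" "loc_ring R T" "loc_phi R T"
    by (rule ring_hom_ringI2) (auto intro: P(1) LS.ring_axioms LT.ring_axioms)
  have mapC: "\<And>r. r \<in> carrier R \<Longrightarrow> loc_map R S r \<in> carrier (loc_ring R S)"
    by (rule loc_map_carrier[OF assms(1) SR])
  have mapCT: "\<And>r. r \<in> carrier R \<Longrightarrow> loc_map R T r \<in> carrier (loc_ring R T)"
    by (rule loc_map_carrier[OF assms(1) TR])
  have invC: "\<And>s. s \<in> S \<Longrightarrow> loc_inv R S s \<in> carrier (loc_ring R S)"
    by (rule loc_inv_carrier[OF assms(1) SR])
  have invCT: "\<And>s. s \<in> S \<Longrightarrow> loc_inv R T s \<in> carrier (loc_ring R T)"
    using assms(4) by (intro loc_inv_carrier[OF assms(1) TR]) blast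
  have zS: "loc_phi R T \<zero>\<^bsub>loc_ring R S\<^esub> = \<zero>\<^bsub>loc_ring R T\<^esub>" by simp
  have sub: "\<aa> \<subseteq> \<bb>"
  proof
    fix r assume "r \<in> \<aa>"
    then have r: "r \<in> carrier R" "loc_map R S r = \<zero>\<^bsub>loc_ring R S\<^esub>" using aS by (auto simp: ass_def)
    then have "loc_map R T r = \<zero>\<^bsub>loc_ring R T\<^esub>" using P(2)[OF r(1)] zS by simp
    then show "r \<in> \<bb>" using aT r(1) by (auto simp: ass_def)
  qed
  have mulL: "loc_phi R T (loc_inv R S s \<otimes>\<^bsub>loc_ring R S\<^esub> loc_map R S r)
                  = loc_inv R T s \<otimes>\<^bsub>loc_ring R T\<^esub> loc_map R T r" if "s \<in> S" "r \<in> carrier R" for s r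
    using that by (simp add: invC mapC P(2) P(3))
  have mulR: "loc_phi R T (loc_map R S r \<otimes>\<^bsub>loc_ring R S\<^esub> loc_inv R S s)
                  = loc_map R T r \<otimes>\<^bsub>loc_ring R T\<^esub> loc_inv R T s" if "s \<in> S" "r \<in> carrier R" for s r
    using that by (simp add: invC mapC P(2) P(3))
  have bC: "b \<in> carrier R" and bZ: "loc_map R T b = \<zero>\<^bsub>loc_ring R T\<^esub>" if "b \<in> \<bb>" for b
    using that aT by (auto simp: ass_def)
  have cancelL: "r \<in> \<bb>" if s: "s \<in> S" and r: "r \<in> carrier R"
      and z: "loc_inv R T s \<otimes>\<^bsub>loc_ring R T\<^esub> loc_map R T r = \<zero>\<^bsub>loc_ring R T\<^esub>" for s r
  proof -
    have sT: "s \<in> T" "s \<in> carrier R" using s assms(4) SR by auto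
    have "loc_map R T r = (loc_map R T s \<otimes>\<^bsub>loc_ring R T\<^esub> loc_inv R T s) \<otimes>\<^bsub>loc_ring R T\<^esub> loc_map R T r"
      using loc_map_inv(1)[OF assms(1) TR sT(1)] mapCT[OF r] by simp
    also have "\<dots> = loc_map R T s \<otimes>\<^bsub>loc_ring R T\<^esub> (loc_inv R T s \<otimes>\<^bsub>loc_ring R T\<^esub> loc_map R T r)"
      using mapCT[OF sT(2)] invCT[OF s] mapCT[OF r] by (simp add: LT.m_assoc)
    also have "\<dots> = \<zero>\<^bsub>loc_ring R T\<^esub>" using z mapCT[OF sT(2)] by simp
    finally show ?thesis using aT r by (auto simp: ass_def)
  qed
  have cancelR: "r \<in> \<bb>" if s: "s \<in> S" and r: "r \<in> carrier R"
      and z: "loc_map R T r \<otimes>\<^bsub>loc_ring R T\<^esub> loc_inv R T s = \<zero>\<^bsub>loc_ring R T\<^esub>" for s r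
  proof -
    have sT: "s \<in> T" "s \<in> carrier R" using s assms(4) SR by auto
    have "loc_map R T r = loc_map R T r \<otimes>\<^bsub>loc_ring R T\<^esub> (loc_inv R T s \<otimes>\<^bsub>loc_ring R T\<^esub> loc_map R T s)"
      using loc_map_inv(2)[OF assms(1) TR sT(1)] mapCT[OF r] by simp
    also have "\<dots> = (loc_map R T r \<otimes>\<^bsub>loc_ring R T\<^esub> loc_inv R T s) \<otimes>\<^bsub>loc_ring R T\<^esub> loc_map R T s"
      using mapCT[OF sT(2)] invCT[OF s] mapCT[OF r] by (simp add: LT.m_assoc)
    also have "\<dots> = \<zero>\<^bsub>loc_ring R T\<^esub>" using z mapCT[OF sT(2)] by simp
    finally show ?thesis using aT r by (auto simp: ass_def)
  qed
  have left: "(\<exists>\<phi>. \<phi> \<in> ring_hom (loc_ring R S) (loc_ring R T)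
           \<and> (\<forall>r\<in>carrier R. \<phi> (loc_map R S r) = loc_map R T r)
           \<and> (\<forall>s\<in>S. \<forall>r\<in>carrier R.
                \<phi> (loc_inv R S s \<otimes>\<^bsub>loc_ring R S\<^esub> loc_map R S r)
                  = loc_inv R T s \<otimes>\<^bsub>loc_ring R T\<^esub> loc_map R T r)
           \<and> a_kernel (loc_ring R S) (loc_ring R T) \<phi>
                = {loc_inv R S s \<otimes>\<^bsub>loc_ring R S\<^esub> loc_map R S b | s b. s \<in> S \<and> b \<in> \<bb>})"
    if ll: "left_localizable R S"
  proof (intro exI conjI ballI)
    show "loc_phi R T \<in> ring_hom (loc_ring R S) (loc_ring R T)" by (rule P(1))
    show "loc_phi R T (loc_map R S r) = loc_map R T r" if "r \<in> carrier R" for r using P(2) that .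
    show "loc_phi R T (loc_inv R S s \<otimes>\<^bsub>loc_ring R S\<^esub> loc_map R S r)
                  = loc_inv R T s \<otimes>\<^bsub>loc_ring R T\<^esub> loc_map R T r" if "s \<in> S" "r \<in> carrier R" for s r
      using mulL that .
    show "a_kernel (loc_ring R S) (loc_ring R T) (loc_phi R T)
                = {loc_inv R S s \<otimes>\<^bsub>loc_ring R S\<^esub> loc_map R S b | s b. s \<in> S \<and> b \<in> \<bb>}"
    proof (intro equalityI subsetI)
      fix q assume "q \<in> a_kernel (loc_ring R S) (loc_ring R T) (loc_phi R T)"
      then have q: "q \<in> carrier (loc_ring R S)" "loc_phi R T q = \<zero>\<^bsub>loc_ring R T\<^esub>"
        unfolding a_kernel_def' by simp_all
      have "\<exists>s\<in>S. \<exists>r\<in>carrier R. q = loc_inv R S s \<otimes>\<^bsub>loc_ring R S\<^esub> loc_map R S r"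
        using ll q(1) unfolding left_localizable_def by blast
      then obtain s r where sr: "s \<in> S" "r \<in> carrier R" "q = loc_inv R S s \<otimes>\<^bsub>loc_ring R S\<^esub> loc_map R S r"
        by blast
      have z: "loc_phi R T (loc_inv R S s \<otimes>\<^bsub>loc_ring R S\<^esub> loc_map R S r) = \<zero>\<^bsub>loc_ring R T\<^esub>" using q(2) sr(3) by simp
      have "r \<in> \<bb>" by (rule cancelL[OF sr(1,2)]) (use z mulL[OF sr(1,2)] in simp)
      then show "q \<in> {loc_inv R S s \<otimes>\<^bsub>loc_ring R S\<^esub> loc_map R S b | s b. s \<in> S \<and> b \<in> \<bb>}"
        using sr(1,3) by blast
    next
      fix q assume "q \<in> {loc_inv R S s \<otimes>\<^bsub>loc_ring R S\<^esub> loc_map R S b | s b. s \<in> S \<and> b \<in> \<bb>}"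
      then obtain s b where sb: "s \<in> S" "b \<in> \<bb>" "q = loc_inv R S s \<otimes>\<^bsub>loc_ring R S\<^esub> loc_map R S b" by blast
      have "q \<in> carrier (loc_ring R S)" unfolding sb(3) by (rule LS.m_closed[OF invC[OF sb(1)] mapC[OF bC[OF sb(2)]]])
      moreover have "loc_phi R T q = \<zero>\<^bsub>loc_ring R T\<^esub>"
      proof -
        have "loc_phi R T q = loc_inv R T s \<otimes>\<^bsub>loc_ring R T\<^esub> loc_map R T b" unfolding sb(3) by (rule mulL[OF sb(1) bC[OF sb(2)]])
        also have "\<dots> = \<zero>\<^bsub>loc_ring R T\<^esub>" unfolding bZ[OF sb(2)] by (rule LT.r_null[OF invCT[OF sb(1)]])
        finally show ?thesis .
      qed
      ultimately show "q \<in> a_kernel (loc_ring R S) (loc_ring R T) (loc_phi R T)"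
        unfolding a_kernel_def' by simp
    qed
  qed
  have right: "(\<exists>\<phi>. \<phi> \<in> ring_hom (loc_ring R S) (loc_ring R T)
           \<and> (\<forall>r\<in>carrier R. \<phi> (loc_map R S r) = loc_map R T r)
           \<and> (\<forall>s\<in>S. \<forall>r\<in>carrier R.
                \<phi> (loc_map R S r \<otimes>\<^bsub>loc_ring R S\<^esub> loc_inv R S s)
                  = loc_map R T r \<otimes>\<^bsub>loc_ring R T\<^esub> loc_inv R T s)
           \<and> a_kernel (loc_ring R S) (loc_ring R T) \<phi>
                = {loc_map R S b \<otimes>\<^bsub>loc_ring R S\<^esub> loc_inv R S s | s b. s \<in> S \<and> b \<in> \<bb>})"
    if rl: "right_localizable R S"
  proof (intro exI conjI ballI)
    show "loc_phi R T \<in> ring_hom (loc_ring R S) (loc_ring R T)" by (rule P(1))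
    show "loc_phi R T (loc_map R S r) = loc_map R T r" if "r \<in> carrier R" for r using P(2) that .
    show "loc_phi R T (loc_map R S r \<otimes>\<^bsub>loc_ring R S\<^esub> loc_inv R S s)
                  = loc_map R T r \<otimes>\<^bsub>loc_ring R T\<^esub> loc_inv R T s" if "s \<in> S" "r \<in> carrier R" for s r
      using mulR that .
    show "a_kernel (loc_ring R S) (loc_ring R T) (loc_phi R T)
                = {loc_map R S b \<otimes>\<^bsub>loc_ring R S\<^esub> loc_inv R S s | s b. s \<in> S \<and> b \<in> \<bb>}"
    proof (intro equalityI subsetI)
      fix q assume "q \<in> a_kernel (loc_ring R S) (loc_ring R T) (loc_phi R T)"
      then have q: "q \<in> carrier (loc_ring R S)" "loc_phi R T q = \<zero>\<^bsub>loc_ring R T\<^esub>"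
        unfolding a_kernel_def' by simp_all
      have "\<exists>s\<in>S. \<exists>r\<in>carrier R. q = loc_map R S r \<otimes>\<^bsub>loc_ring R S\<^esub> loc_inv R S s"
        using rl q(1) unfolding right_localizable_def by blast
      then obtain s r where sr: "s \<in> S" "r \<in> carrier R" "q = loc_map R S r \<otimes>\<^bsub>loc_ring R S\<^esub> loc_inv R S s"
        by blast
      have z: "loc_phi R T (loc_map R S r \<otimes>\<^bsub>loc_ring R S\<^esub> loc_inv R S s) = \<zero>\<^bsub>loc_ring R T\<^esub>" using q(2) sr(3) by simp
      have "r \<in> \<bb>" by (rule cancelR[OF sr(1,2)]) (use z mulR[OF sr(1,2)] in simp)
      then show "q \<in> {loc_map R S b \<otimes>\<^bsub>loc_ring R S\<^esub> loc_inv R S s | s b. s \<in> S \<and> b \<in> \<bb>}"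
        using sr(1,3) by blast
    next
      fix q assume "q \<in> {loc_map R S b \<otimes>\<^bsub>loc_ring R S\<^esub> loc_inv R S s | s b. s \<in> S \<and> b \<in> \<bb>}"
      then obtain s b where sb: "s \<in> S" "b \<in> \<bb>" "q = loc_map R S b \<otimes>\<^bsub>loc_ring R S\<^esub> loc_inv R S s" by blast
      have "q \<in> carrier (loc_ring R S)" unfolding sb(3) by (rule LS.m_closed[OF mapC[OF bC[OF sb(2)]] invC[OF sb(1)]])
      moreover have "loc_phi R T q = \<zero>\<^bsub>loc_ring R T\<^esub>"
      proof -
        have "loc_phi R T q = loc_map R T b \<otimes>\<^bsub>loc_ring R T\<^esub> loc_inv R T s" unfolding sb(3) by (rule mulR[OF sb(1) bC[OF sb(2)]])
        also have "\<dots> = \<zero>\<^bsub>loc_ring R T\<^esub>" unfolding bZ[OF sb(2)] by (rule LT.l_null[OF invCT[OF sb(1)]])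
        finally show ?thesis .
      qed
      ultimately show "q \<in> a_kernel (loc_ring R S) (loc_ring R T) (loc_phi R T)"
        unfolding a_kernel_def' by simp
    qed
  qed
  show ?thesis
  proof (cases k)
    case LeftLoc
    have ll: "left_localizable R S" using kS LeftLoc by (simp add: kind_localizable_def)
    show ?thesis using sub left[OF ll] LeftLoc by simp
  next
    case RightLoc
    have rl: "right_localizable R S" using kS RightLoc by (simp add: kind_localizable_def)
    show ?thesis using sub right[OF rl] RightLoc by simp
  next
    case TwoSided
    have ll: "left_localizable R S" using kS TwoSided by (simp add: kind_localizable_def)
    show ?thesis using sub left[OF ll] TwoSided by simp
  qed
qed

end
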